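(* Let $d$ be odd and $s$ even with $s\mid d-1$, and let $G=\langle\tau\rangle\rtimes\langle\sigma\rangle$ with $\tau$ of order $d$, $\sigma$ of order $s$, conjugation by $\sigma$ an automorphism of $\langle\tau\rangle$ of order exactly $s$, and $\sigma^{s/2}\tau\sigma^{-s/2}=\tau^{-1}$. With the left ideals $M_1,\dots,M_4$ of $\mathbb{Z}[G]$ and the maps $d_i,h_i$ defined in the context: (1) the sequence $0\to M_1\xrightarrow{d_1}M_2\xrightarrow{d_2}M_3\xrightarrow{d_3}M_4\to0$ is exact; (2) $h_2$ is a well-defined $\mathbb{Z}[G]$-module homomorphism; (3) the prism conditions hold at all four modules: $h_1d_1=d\cdot\mathrm{id}_{M_1}$, $d_1h_1+h_2d_2=d\cdot\mathrm{id}_{M_2}$, $d_2h_2+h_3d_3=d\cdot\mathrm{id}_{M_3}$, $d_3h_3=d\cdot\mathrm{id}_{M_4}$.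
   Context: $\theta_j\in\{1,\dots,d-1\}$ by $\sigma^j\tau\sigma^{-j}=\tau^{\theta_j}$. In $\mathbb{Z}[G]$: $T_\tau=\sum_{i=0}^{d-1}\tau^i$, $T_\sigma=\sum_{j=0}^{s-1}\sigma^j$, $\mathcal{B}=(1-\sigma^{s/2})\tau^{\frac{d+1}{2}}\sum_{j=0}^{\frac{s}{2}-1}(\sum_{i=0}^{\theta_j-1}\tau^i)\sigma^j$. Left ideals (left $\mathbb{Z}[G]$-modules): $M_1=\mathbb{Z}[G]T_\sigma T_\tau$, $M_2=\mathbb{Z}[G]T_\sigma$, $M_3=\mathbb{Z}[G]\mathcal{B}$, $M_4=\mathbb{Z}[G]\mathcal{B}T_\tau$. Maps: $d_1:M_1\to M_2$ inclusion; $d_2:M_2\to M_3$, $x\mapsto x(1-\tau)$ (note $T_\sigma(1-\tau)\in\mathbb{Z}[G]\mathcal{B}$); $d_3:M_3\to M_4$, $x\mapsto xT_\tau$; $h_1:M_2\to M_1$, $x\mapsto xT_\tau$; $h_2:M_3\to M_2$, $h_2(x\mathcal{B})=x\sum_{i=0}^{d-1}(\frac{d-1}{2}-i)\tau^{i}\tau^{\frac{d+1}{2}}T_\sigma$ for $x\in\mathbb{Z}[G]$; $h_3:M_4\to M_3$ inclusion. *)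

theory Defs
  imports "HOL-Algebra.Algebra" "HOL-Library.Function_Algebras"
begin

(* Integral group ring Z[G] of a finite group G (HOL-Algebra): functions
   carrier G -> int, extended by 0 outside the carrier.  Addition, zero,
   subtraction and finite sums are pointwise (Function_Algebras). *)
definition ZG :: "('a, 'b) monoid_scheme \<Rightarrow> ('a \<Rightarrow> int) set" where
  "ZG G = {x. \<forall>g. g \<notin> carrier G \<longrightarrow> x g = 0}"

definition gmul :: "('a, 'b) monoid_scheme \<Rightarrow> ('a \<Rightarrow> int) \<Rightarrow> ('a \<Rightarrow> int) \<Rightarrow> ('a \<Rightarrow> int)" where
  "gmul G x y = (\<lambda>g. if g \<in> carrier G
      then (\<Sum>h\<in>carrier G. x h * y (inv\<^bsub>G\<^esub> h \<otimes>\<^bsub>G\<^esub> g)) else 0)"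

definition gel :: "('a, 'b) monoid_scheme \<Rightarrow> 'a \<Rightarrow> ('a \<Rightarrow> int)" where
  "gel G g = (\<lambda>k. if k = g then 1 else 0)"

definition zsc :: "int \<Rightarrow> ('a \<Rightarrow> int) \<Rightarrow> ('a \<Rightarrow> int)" where
  "zsc n x = (\<lambda>g. n * x g)"

definition lideal :: "('a, 'b) monoid_scheme \<Rightarrow> ('a \<Rightarrow> int) \<Rightarrow> ('a \<Rightarrow> int) set" where
  "lideal G b = {gmul G x b | x. x \<in> ZG G}"

definition theta :: "('a, 'b) monoid_scheme \<Rightarrow> 'a \<Rightarrow> 'a \<Rightarrow> nat \<Rightarrow> nat \<Rightarrow> nat" where
  "theta G \<tau> \<sigma> d j = (THE t. t \<in> {1..<d} \<and>
      \<sigma> [^]\<^bsub>G\<^esub> j \<otimes>\<^bsub>G\<^esub> \<tau> \<otimes>\<^bsub>G\<^esub> inv\<^bsub>G\<^esub> (\<sigma> [^]\<^bsub>G\<^esub> j) = \<tau> [^]\<^bsub>G\<^esub> t)"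

definition Ttau :: "('a, 'b) monoid_scheme \<Rightarrow> 'a \<Rightarrow> nat \<Rightarrow> ('a \<Rightarrow> int)" where
  "Ttau G \<tau> d = (\<Sum>i<d. gel G (\<tau> [^]\<^bsub>G\<^esub> i))"

definition Tsig :: "('a, 'b) monoid_scheme \<Rightarrow> 'a \<Rightarrow> nat \<Rightarrow> ('a \<Rightarrow> int)" where
  "Tsig G \<sigma> s = (\<Sum>j<s. gel G (\<sigma> [^]\<^bsub>G\<^esub> j))"

definition Bel :: "('a, 'b) monoid_scheme \<Rightarrow> 'a \<Rightarrow> 'a \<Rightarrow> nat \<Rightarrow> nat \<Rightarrow> ('a \<Rightarrow> int)" where
  "Bel G \<tau> \<sigma> d s =
     gmul G (gmul G (gel G \<one>\<^bsub>G\<^esub> - gel G (\<sigma> [^]\<^bsub>G\<^esub> (s div 2)))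
                    (gel G (\<tau> [^]\<^bsub>G\<^esub> ((d + 1) div 2))))
       (\<Sum>j<s div 2. gmul G (\<Sum>i<theta G \<tau> \<sigma> d j. gel G (\<tau> [^]\<^bsub>G\<^esub> i))
                              (gel G (\<sigma> [^]\<^bsub>G\<^esub> j)))"

definition Cel :: "('a, 'b) monoid_scheme \<Rightarrow> 'a \<Rightarrow> 'a \<Rightarrow> nat \<Rightarrow> nat \<Rightarrow> ('a \<Rightarrow> int)" where
  "Cel G \<tau> \<sigma> d s =
     gmul G (gmul G (\<Sum>i<d. zsc ((int d - 1) div 2 - int i) (gel G (\<tau> [^]\<^bsub>G\<^esub> i)))
                    (gel G (\<tau> [^]\<^bsub>G\<^esub> ((d + 1) div 2))))
       (Tsig G \<sigma> s)"

definition M1 where "M1 G \<tau> \<sigma> d s = lideal G (gmul G (Tsig G \<sigma> s) (Ttau G \<tau> d))"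
definition M2 where "M2 G \<tau> \<sigma> d s = lideal G (Tsig G \<sigma> s)"
definition M3 where "M3 G \<tau> \<sigma> d s = lideal G (Bel G \<tau> \<sigma> d s)"
definition M4 where "M4 G \<tau> \<sigma> d s = lideal G (gmul G (Bel G \<tau> \<sigma> d s) (Ttau G \<tau> d))"

definition d1 :: "('a \<Rightarrow> int) \<Rightarrow> ('a \<Rightarrow> int)" where "d1 x = x"
definition d2 where "d2 G \<tau> x = gmul G x (gel G \<one>\<^bsub>G\<^esub> - gel G \<tau>)"
definition d3 where "d3 G \<tau> d x = gmul G x (Ttau G \<tau> d)"
definition h1 where "h1 G \<tau> d x = gmul G x (Ttau G \<tau> d)"
(* h2 (x B) = x C, chosen via any representative x *)
definition h2 where
  "h2 G \<tau> \<sigma> d s m = (SOME z. \<exists>x\<in>ZG G. m = gmul G x (Bel G \<tau> \<sigma> d s) \<and> z = gmul G x (Cel G \<tau> \<sigma> d s))"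
definition h3 :: "('a \<Rightarrow> int) \<Rightarrow> ('a \<Rightarrow> int)" where "h3 x = x"

end

theory Submission
  imports Defs
begin


lemma sum_fun_apply: "(sum f A) x = sum (\<lambda>a. f a x) A"
  by (induction A rule: infinite_finite_induct) auto

lemma diff_fun_apply': "(f - g) x = (f x - g x::int)"
  by simp

locale gr = group G for G :: "('a, 'b) monoid_scheme" (structure) +
  assumes fin: "finite (carrier G)"
begin

abbreviation gm (infixl "**" 70) where "x ** y \<equiv> gmul G x y"
abbreviation e where "e \<equiv> gel G"

lemma bij_l: "k \<in> carrier G \<Longrightarrow> bij_betw (\<lambda>h. k \<otimes> h) (carrier G) (carrier G)"
  apply (rule bij_betw_imageI[OF inj_on_cmult], assumption)
  apply (auto simp: image_def)
  by (metis inv_closed m_assoc r_inv l_one m_closed)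
lemma bij_r: "k \<in> carrier G \<Longrightarrow> bij_betw (\<lambda>h. h \<otimes> k) (carrier G) (carrier G)"
  apply (rule bij_betw_imageI[OF inj_on_multc], assumption)
  apply (auto simp: image_def)
  by (metis inv_closed m_assoc l_inv r_one m_closed)

lemma gm_apply: "g \<in> carrier G \<Longrightarrow> (x ** y) g = (\<Sum>h\<in>carrier G. x h * y (inv h \<otimes> g))"
  by (simp add: gmul_def)
lemma gm_out: "g \<notin> carrier G \<Longrightarrow> (x ** y) g = 0"
  by (simp add: gmul_def)

lemma gm_ZG[simp]: "x ** y \<in> ZG G"
  by (simp add: ZG_def gmul_def)
lemma gel_ZG[simp]: "g \<in> carrier G \<Longrightarrow> e g \<in> ZG G"
  by (auto simp: ZG_def gel_def)
lemma add_ZG[simp]: "x \<in> ZG G \<Longrightarrow> y \<in> ZG G \<Longrightarrow> x + y \<in> ZG G"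
  by (auto simp: ZG_def)
lemma diff_ZG[simp]: "x \<in> ZG G \<Longrightarrow> y \<in> ZG G \<Longrightarrow> x - y \<in> ZG G"
  by (auto simp: ZG_def)
lemma zero_ZG[simp]: "0 \<in> ZG G"
  by (auto simp: ZG_def)
lemma zsc_ZG[simp]: "x \<in> ZG G \<Longrightarrow> zsc n x \<in> ZG G"
  by (auto simp: ZG_def zsc_def)
lemma sum_ZG[simp]: "(\<And>i. i \<in> A \<Longrightarrow> f i \<in> ZG G) \<Longrightarrow> sum f A \<in> ZG G"
  by (induction A rule: infinite_finite_induct) auto

lemma gm_add_left: "(x + y) ** z = x ** z + y ** z"
  by (rule ext) (simp add: gmul_def distrib_right sum.distrib)
lemma gm_add_right: "z ** (x + y) = z ** x + z ** y"
  by (rule ext) (simp add: gmul_def distrib_left sum.distrib)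
lemma gm_diff_left: "(x - y) ** z = x ** z - y ** z"
  by (rule ext) (simp add: gmul_def left_diff_distrib sum_subtractf)
lemma gm_diff_right: "z ** (x - y) = z ** x - z ** y"
  by (rule ext) (simp add: gmul_def right_diff_distrib sum_subtractf)
lemma gm_zero_left[simp]: "0 ** z = 0"
  by (rule ext) (simp add: gmul_def)
lemma gm_zero_right[simp]: "z ** 0 = 0"
  by (rule ext) (simp add: gmul_def)
lemma gm_zsc_left: "zsc n x ** z = zsc n (x ** z)"
  by (rule ext) (simp add: gmul_def zsc_def sum_distrib_left mult.assoc)
lemma gm_zsc_right: "z ** zsc n x = zsc n (z ** x)"
  by (rule ext) (simp add: gmul_def zsc_def sum_distrib_left algebra_simps)
lemma gm_sum_left: "sum f A ** z = (\<Sum>i\<in>A. f i ** z)"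
proof (induction A rule: infinite_finite_induct)
  case (insert a F) then show ?case by (metis (no_types) sum.insert gm_add_left)
qed (metis sum.infinite sum.empty gm_zero_left)+
lemma gm_sum_right: "z ** sum f A = (\<Sum>i\<in>A. z ** f i)"
proof (induction A rule: infinite_finite_induct)
  case (insert a F) then show ?case by (metis (no_types) sum.insert gm_add_right)
qed (metis sum.infinite sum.empty gm_zero_right)+

lemma gm_assoc: "(x ** y) ** z = x ** (y ** z)"
proof (rule ext)
  fix g
  show "((x ** y) ** z) g = (x ** (y ** z)) g"
  proof (cases "g \<in> carrier G")
    case False then show ?thesis by (simp add: gm_out)
  next
    case g: True
    have "((x ** y) ** z) g = (\<Sum>h\<in>carrier G. (\<Sum>k\<in>carrier G. x k * y (inv k \<otimes> h)) * z (inv h \<otimes> g))"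
      using g by (simp add: gm_apply)
    also have "\<dots> = (\<Sum>h\<in>carrier G. \<Sum>k\<in>carrier G. x k * y (inv k \<otimes> h) * z (inv h \<otimes> g))"
      by (simp add: sum_distrib_right)
    also have "\<dots> = (\<Sum>k\<in>carrier G. \<Sum>h\<in>carrier G. x k * y (inv k \<otimes> h) * z (inv h \<otimes> g))"
      by (rule sum.swap)
    also have "\<dots> = (\<Sum>k\<in>carrier G. x k * (\<Sum>h\<in>carrier G. y (inv k \<otimes> h) * z (inv h \<otimes> g)))"
      by (simp add: sum_distrib_left mult.assoc)
    also have "\<dots> = (\<Sum>k\<in>carrier G. x k * (\<Sum>h'\<in>carrier G. y h' * z (inv h' \<otimes> (inv k \<otimes> g))))"
    proof (rule sum.cong[OF refl])
      fix k assume k: "k \<in> carrier G"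
      have bij: "bij_betw (\<lambda>h'. k \<otimes> h') (carrier G) (carrier G)"
        using k by (rule bij_l)
      have "(\<Sum>h\<in>carrier G. y (inv k \<otimes> h) * z (inv h \<otimes> g)) =
            (\<Sum>h'\<in>carrier G. y (inv k \<otimes> (k \<otimes> h')) * z (inv (k \<otimes> h') \<otimes> g))"
        using sum.reindex_bij_betw[OF bij, symmetric] by simp
      also have "\<dots> = (\<Sum>h'\<in>carrier G. y h' * z (inv h' \<otimes> (inv k \<otimes> g)))"
        using k g by (intro sum.cong) (auto simp: m_assoc[symmetric] inv_mult_group)
      finally show "x k * (\<Sum>h\<in>carrier G. y (inv k \<otimes> h) * z (inv h \<otimes> g)) =
            x k * (\<Sum>h'\<in>carrier G. y h' * z (inv h' \<otimes> (inv k \<otimes> g)))" by simp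
    qed
    also have "\<dots> = (x ** (y ** z)) g"
      using g by (simp add: gm_apply)
    finally show ?thesis .
  qed
qed


lemma gel_apply: "e g k = (if k = g then 1 else 0)"
  by (simp add: gel_def)

lemma inv_eq_iff_aux: "k \<in> carrier G \<Longrightarrow> g \<in> carrier G \<Longrightarrow> h \<in> carrier G \<Longrightarrow>
   (inv k \<otimes> g = h) = (k = g \<otimes> inv h)"
  by (metis inv_closed inv_inv inv_solve_left inv_solve_right m_closed)

lemma gm_gel_right_apply:
  assumes "g \<in> carrier G" "h \<in> carrier G"
  shows "(x ** e h) g = x (g \<otimes> inv h)"
proof -
  have "(x ** e h) g = (\<Sum>k\<in>carrier G. if k = g \<otimes> inv h then x k else 0)"
    using assms by (simp add: gm_apply gel_apply) (intro sum.cong refl, auto simp: inv_eq_iff_aux)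
  also have "\<dots> = x (g \<otimes> inv h)" using assms by (simp add: sum.delta fin)
  finally show ?thesis .
qed

lemma gm_gel_left_apply:
  assumes "g \<in> carrier G" "h \<in> carrier G"
  shows "(e h ** x) g = x (inv h \<otimes> g)"
proof -
  have "(e h ** x) g = (\<Sum>k\<in>carrier G. if k = h then x (inv k \<otimes> g) else 0)"
    using assms by (simp add: gm_apply gel_apply) (intro sum.cong refl, auto)
  also have "\<dots> = x (inv h \<otimes> g)" using assms by (simp add: sum.delta fin)
  finally show ?thesis .
qed

lemma gel_mult: "g \<in> carrier G \<Longrightarrow> h \<in> carrier G \<Longrightarrow> e g ** e h = e (g \<otimes> h)"
proof (rule ext)
  fix k assume g: "g \<in> carrier G" and h: "h \<in> carrier G"
  show "(e g ** e h) k = e (g \<otimes> h) k"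
  proof (cases "k \<in> carrier G")
    case True then show ?thesis using g h
      by (simp add: gm_gel_left_apply gel_apply inv_solve_left m_assoc) (metis inv_solve_left m_closed)
  next
    case False then show ?thesis using g h by (auto simp: gm_out gel_apply)
  qed
qed

lemma gm_one_left: "x \<in> ZG G \<Longrightarrow> e \<one> ** x = x"
  apply (rule ext) subgoal for g by (cases "g \<in> carrier G") (auto simp: gm_gel_left_apply gm_out ZG_def)
  done
lemma gm_one_right: "x \<in> ZG G \<Longrightarrow> x ** e \<one> = x"
  apply (rule ext) subgoal for g by (cases "g \<in> carrier G") (auto simp: gm_gel_right_apply gm_out ZG_def)
  done

lemma ZG_expand: "x \<in> ZG G \<Longrightarrow> x = (\<Sum>g\<in>carrier G. zsc (x g) (e g))"
  by (rule ext) (auto simp: sum_fun_apply zsc_def gel_apply ZG_def fin if_distrib sum.delta cong: if_cong)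

lemma zsc_zsc[simp]: "zsc a (zsc b x) = zsc (a * b) x"
  by (simp add: zsc_def mult.assoc)
lemma zsc_1[simp]: "zsc 1 x = x"
  by (simp add: zsc_def)
lemma zsc_0[simp]: "zsc 0 x = 0"
  by (simp add: zsc_def zero_fun_def)
lemma zsc_add: "zsc a (x + y) = zsc a x + zsc a y"
  by (rule ext) (simp add: zsc_def algebra_simps)
lemma zsc_diff: "zsc a (x - y) = zsc a x - zsc a y"
  by (rule ext) (simp add: zsc_def algebra_simps)
lemma zsc_sum: "zsc a (sum f A) = (\<Sum>i\<in>A. zsc a (f i))"
  by (rule ext) (simp add: zsc_def sum_fun_apply sum_distrib_left)
lemma zsc_cancel: "a \<noteq> 0 \<Longrightarrow> zsc a x = zsc a y \<Longrightarrow> x = y"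
  by (rule ext) (metis mult_cancel_left zsc_def)
lemma zsc_apply: "zsc a x g = a * x g"
  by (simp add: zsc_def)
lemma zsc_of_nat_sum: "zsc (int n) x = (\<Sum>i<n. x)"
  by (rule ext) (simp add: zsc_def sum_fun_apply)

end


locale S = gr G for G :: "('a, 'b) monoid_scheme" (structure) +
  fixes \<tau> \<sigma> :: 'a and d s :: nat
  assumes d_odd: "odd d" and s_even: "even s"
    and tau: "\<tau> \<in> carrier G" and sigma: "\<sigma> \<in> carrier G"
    and ord_tau: "ord \<tau> = d" and ord_sigma: "ord \<sigma> = s"
    and gen: "carrier G = {\<tau> [^] i \<otimes> \<sigma> [^] j | i j. i < d \<and> j < s}"
    and card: "card (carrier G) = d * s"
    and normal: "\<sigma> \<otimes> \<tau> \<otimes> inv \<sigma> \<in> {\<tau> [^] i | i. i < d}"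
    and aut_order: "\<forall>k. 0 < k \<and> k < s \<longrightarrow> \<sigma> [^] k \<otimes> \<tau> \<otimes> inv (\<sigma> [^] k) \<noteq> \<tau>"
    and half: "\<sigma> [^] (s div 2) \<otimes> \<tau> \<otimes> inv (\<sigma> [^] (s div 2)) = inv \<tau>"
begin

abbreviation tp where "tp (i::nat) \<equiv> \<tau> [^] i"
abbreviation sp where "sp (i::nat) \<equiv> \<sigma> [^] i"
abbreviation mm where "mm \<equiv> s div 2"
abbreviation cc where "cc \<equiv> (d + 1) div 2"

lemma tp_c[simp]: "tp i \<in> carrier G" using tau by simp
lemma sp_c[simp]: "sp i \<in> carrier G" using sigma by simp

lemma s_ge2: "s \<ge> 2"
proof -
  have "\<one> \<in> carrier G" by simp
  then obtain i j where "j < s" using gen by auto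
  then show ?thesis using s_even by presburger
qed

lemma tau_ne: "\<tau> \<noteq> \<one>"
proof
  assume "\<tau> = \<one>"
  then have "\<sigma> [^] (1::nat) \<otimes> \<tau> \<otimes> inv (\<sigma> [^] (1::nat)) = \<tau>" using sigma by simp
  then show False using aut_order s_ge2 by auto
qed

lemma tp_eq_one: "tp n = \<one> \<longleftrightarrow> d dvd n"
  using pow_eq_id[OF tau] ord_tau by simp

lemma d_ge3: "d \<ge> 3"
proof -
  have "d \<noteq> 1" using tp_eq_one[of 1] tau_ne tau by auto
  moreover have "d \<noteq> 0" using d_odd odd_pos by blast
  ultimately show ?thesis using d_odd by presburger
qed

lemma tp_add: "tp a \<otimes> tp b = tp (a + b)"
  using tau by (simp add: nat_pow_mult)
lemma sp_add: "sp a \<otimes> sp b = sp (a + b)"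
  using sigma by (simp add: nat_pow_mult)

lemma tp_d[simp]: "tp d = \<one>" using tp_eq_one[of d] by simp
lemma sp_s[simp]: "sp s = \<one>" using pow_eq_id[OF sigma] ord_sigma by simp

lemma tp_mod: "tp n = tp (n mod d)"
proof -
  have "tp n = tp (d * (n div d)) \<otimes> tp (n mod d)" by (simp add: tp_add)
  also have "tp (d * (n div d)) = \<one>" using tp_eq_one by simp
  finally show ?thesis by simp
qed

lemma tp_eq_iff: "tp a = tp b \<longleftrightarrow> a mod d = b mod d"
proof
  assume h: "tp a = tp b"
  have "tp (a mod d) = tp (b mod d)" using h tp_mod by metis
  show "a mod d = b mod d"
  proof (rule ccontr)
    assume ne: "a mod d \<noteq> b mod d"
    { fix x y :: nat assume xy: "x < y" "y < d" "tp x = tp y"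
      have "tp x \<otimes> tp (y - x) = tp y" using xy(1) by (simp add: tp_add)
      then have "tp x \<otimes> tp (y - x) = tp x \<otimes> \<one>" using xy(3) by simp
      then have "tp (y - x) = \<one>" by (meson l_cancel one_closed tp_c)
      then have "d dvd (y - x)" using tp_eq_one by simp
      then have False using xy by (simp add: nat_dvd_not_less) }
    note * = this
    have "a mod d < d" "b mod d < d" using d_ge3 by auto
    then show False using * ne \<open>tp (a mod d) = tp (b mod d)\<close> by (metis nat_neq_iff)
  qed
next
  assume "a mod d = b mod d" then show "tp a = tp b" using tp_mod by metis
qed

lemma tp_inj: "i < d \<Longrightarrow> j < d \<Longrightarrow> tp i = tp j \<Longrightarrow> i = j"
  using tp_eq_iff by simp

lemma conj_pow: "x \<in> carrier G \<Longrightarrow> g \<in> carrier G \<Longrightarrow>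
   g \<otimes> x [^] (n::nat) \<otimes> inv g = (g \<otimes> x \<otimes> inv g) [^] n"
proof (induction n)
  case 0 then show ?case by simp
next
  case (Suc n)
  have aux: "\<And>z. z \<in> carrier G \<Longrightarrow> inv g \<otimes> (g \<otimes> z) = z"
    using Suc.prems by (metis l_inv m_assoc l_one inv_closed)
  have "g \<otimes> x [^] Suc n \<otimes> inv g = (g \<otimes> x [^] n \<otimes> inv g) \<otimes> (g \<otimes> x \<otimes> inv g)"
    using Suc.prems by (simp add: m_assoc aux)
  also have "\<dots> = (g \<otimes> x \<otimes> inv g) [^] Suc n" using Suc by simp
  finally show ?case .
qed

lemma conj_tp_ex: "\<exists>k<d. sp j \<otimes> \<tau> \<otimes> inv (sp j) = tp k"
proof (induction j)
  case 0 then show ?case using d_ge3 tau by (intro exI[of _ 1]) auto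
next
  case (Suc j)
  then obtain k where k: "k < d" "sp j \<otimes> \<tau> \<otimes> inv (sp j) = tp k" by auto
  obtain r where r: "\<sigma> \<otimes> \<tau> \<otimes> inv \<sigma> = tp r" using normal by auto
  have "sp (Suc j) \<otimes> \<tau> \<otimes> inv (sp (Suc j)) = \<sigma> \<otimes> (sp j \<otimes> \<tau> \<otimes> inv (sp j)) \<otimes> inv \<sigma>"
    unfolding nat_pow_Suc2[OF sigma] using sigma tau by (simp add: inv_mult_group m_assoc del: nat_pow_Suc)
  also have "\<dots> = (\<sigma> \<otimes> \<tau> \<otimes> inv \<sigma>) [^] k" using k conj_pow sigma tau by simp
  also have "\<dots> = tp ((r * k) mod d)" using r tau by (simp add: nat_pow_pow tp_mod[symmetric])
  finally show ?case using d_ge3 by (intro exI[of _ "(r * k) mod d"]) auto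
qed

abbreviation th where "th j \<equiv> theta G \<tau> \<sigma> d j"

lemma th_prop: "th j \<in> {1..<d} \<and> sp j \<otimes> \<tau> \<otimes> inv (sp j) = tp (th j)"
proof -
  obtain k where k: "k < d" "sp j \<otimes> \<tau> \<otimes> inv (sp j) = tp k" using conj_tp_ex by blast
  have "k \<noteq> 0"
  proof
    assume "k = 0"
    then have "sp j \<otimes> \<tau> \<otimes> inv (sp j) = \<one>" using k by simp
    then have "sp j \<otimes> \<tau> = sp j" using tau
      by (metis inv_closed inv_solve_right l_one m_closed one_closed sp_c)
    then show False using tau_ne tau by (metis l_cancel r_one one_closed sp_c)
  qed
  have "\<exists>!t. t \<in> {1..<d} \<and> sp j \<otimes> \<tau> \<otimes> inv (sp j) = tp t"
    using k \<open>k \<noteq> 0\<close> tp_inj by (intro ex1I[of _ k]) auto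
  then show ?thesis unfolding theta_def by (rule theI')
qed

lemma th_range: "1 \<le> th j" "th j < d" using th_prop by auto
lemma th_conj: "sp j \<otimes> \<tau> \<otimes> inv (sp j) = tp (th j)" using th_prop by auto

lemma th_unique: "t \<in> {1..<d} \<Longrightarrow> sp j \<otimes> \<tau> \<otimes> inv (sp j) = tp t \<Longrightarrow> th j = t"
  using th_prop tp_inj by auto

lemma sp_tp: "sp j \<otimes> tp i = tp (th j * i) \<otimes> sp j"
proof -
  have "sp j \<otimes> tp i \<otimes> inv (sp j) = tp (th j * i)"
    using conj_pow[of \<tau> "sp j" i] th_conj tau by (simp add: nat_pow_pow)
  then show ?thesis
    by (metis inv_closed inv_solve_right m_closed sp_c tp_c)
qed

lemma sp_tau: "sp j \<otimes> \<tau> = tp (th j) \<otimes> sp j"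
  using sp_tp[of j 1] tau by simp

lemma th0: "th 0 = 1"
  using th_unique[of 1 0] tau d_ge3 by simp

lemma half_tp: "sp mm \<otimes> tp k = inv (tp k) \<otimes> sp mm"
proof -
  have "sp mm \<otimes> tp k \<otimes> inv (sp mm) = inv (tp k)"
    using conj_pow[of \<tau> "sp mm" k] half tau by (simp add: nat_pow_inv)
  then show ?thesis
    by (metis inv_closed inv_solve_right m_closed sp_c tp_c)
qed

lemma inv_tp_c: "i < d \<Longrightarrow> inv (tp (cc + i)) = tp (cc + (d - 1 - i))"
proof -
  assume i: "i < d"
  have "tp (cc + (d - 1 - i)) \<otimes> tp (cc + i) = tp (d + d)"
  proof -
    have "2 * cc = d + 1" using d_odd by presburger
    then have "cc + (d - 1 - i) + (cc + i) = d + d" using i by linarith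
    then show ?thesis by (simp add: tp_add)
  qed
  also have "\<dots> = \<one>" using tp_eq_one by simp
  finally show ?thesis by (intro inv_equality) auto
qed

lemma th_shift: "th (j + mm) = d - th j"
proof (rule th_unique)
  show "d - th j \<in> {1..<d}" using th_range[of j] by auto
  have "sp (j + mm) \<otimes> \<tau> \<otimes> inv (sp (j + mm)) = sp j \<otimes> (sp mm \<otimes> \<tau> \<otimes> inv (sp mm)) \<otimes> inv (sp j)"
    using tau by (simp add: sp_add[symmetric] inv_mult_group m_assoc)
  also have "\<dots> = inv (sp j \<otimes> \<tau> \<otimes> inv (sp j))"
    using tau half by (simp add: inv_mult_group m_assoc)
  also have "\<dots> = inv (tp (th j))" by (simp add: th_conj)
  also have "\<dots> = tp (d - th j)"
  proof (rule inv_equality)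
    show "tp (d - th j) \<otimes> tp (th j) = \<one>" using th_range[of j] by (simp add: tp_add)
  qed auto
  finally show "sp (j + mm) \<otimes> \<tau> \<otimes> inv (sp (j + mm)) = tp (d - th j)" .
qed

end


context S begin

abbreviation N where "N \<equiv> Ttau G \<tau> d"
abbreviation T where "T \<equiv> Tsig G \<sigma> s"
abbreviation Al where "Al \<equiv> (\<Sum>g\<in>carrier G. e g)"
abbreviation H where "H \<equiv> tp ` {..<d}"
abbreviation br where "br k \<equiv> (\<Sum>i<k. e (tp i))"
abbreviation u where "u \<equiv> e (tp cc)"
abbreviation om where "om \<equiv> e \<one> - e \<tau>"

lemma N_def': "N = (\<Sum>i<d. e (tp i))" by (simp add: Ttau_def)
lemma T_def': "T = (\<Sum>j<s. e (sp j))" by (simp add: Tsig_def)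

lemma N_ZG[simp]: "N \<in> ZG G" by (simp add: N_def')
lemma T_ZG[simp]: "T \<in> ZG G" by (simp add: T_def')
lemma Al_ZG[simp]: "Al \<in> ZG G" by simp
lemma br_ZG[simp]: "br k \<in> ZG G" by simp

lemma Al_apply: "g \<in> carrier G \<Longrightarrow> Al g = 1"
  by (simp add: sum_fun_apply gel_apply fin)
lemma Al_out: "g \<notin> carrier G \<Longrightarrow> Al g = 0"
  by (auto simp: sum_fun_apply gel_apply intro!: sum.neutral)

lemma bij_gen: "bij_betw (\<lambda>(i, j). tp i \<otimes> sp j) ({..<d} \<times> {..<s}) (carrier G)"
proof -
  have img: "(\<lambda>(i, j). tp i \<otimes> sp j) ` ({..<d} \<times> {..<s}) = carrier G"
    by (subst gen) auto
  have "inj_on (\<lambda>(i, j). tp i \<otimes> sp j) ({..<d} \<times> {..<s})"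
    by (rule eq_card_imp_inj_on) (auto simp: img card card_cartesian_product)
  then show ?thesis using img by (simp add: bij_betw_def)
qed

lemma inj_tp: "inj_on tp {..<d}"
  using tp_inj by (auto simp: inj_on_def)

lemma card_H: "card H = d"
  using inj_tp by (simp add: card_image)

lemma tp_H[simp]: "tp n \<in> H"
proof -
  have "n mod d < d" using d_ge3 by simp
  then show ?thesis using tp_mod[of n] by blast
qed

lemma H_sub: "H \<subseteq> carrier G" by auto

lemma H_mult: "x \<in> H \<Longrightarrow> y \<in> H \<Longrightarrow> x \<otimes> y \<in> H"
  by (auto simp: tp_add)

lemma N_H: "N = (\<Sum>x\<in>H. e x)"
  unfolding N_def' by (simp add: sum.reindex[OF inj_tp])

lemma bij_H_endo:
  assumes "\<And>x. x \<in> H \<Longrightarrow> f x \<in> H" "inj_on f H"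
  shows "bij_betw f H H"
proof -
  have "f ` H = H" by (rule endo_inj_surj) (use assms in auto)
  then show ?thesis using assms by (simp add: bij_betw_def)
qed

lemma bij_H_l: "h \<in> H \<Longrightarrow> bij_betw (\<lambda>x. h \<otimes> x) H H"
  apply (rule bij_H_endo)
  using H_mult apply blast
  by (meson H_sub inj_on_cmult inj_on_subset subsetD)

lemma bij_H_r: "h \<in> H \<Longrightarrow> bij_betw (\<lambda>x. x \<otimes> h) H H"
  apply (rule bij_H_endo)
  using H_mult apply blast
  apply (rule inj_on_subset[OF inj_on_multc H_sub])
  using H_sub by blast

lemma bij_H_conj: "bij_betw (\<lambda>x. sp j \<otimes> x \<otimes> inv (sp j)) H H"
proof (rule bij_H_endo)
  fix x assume "x \<in> H"
  then obtain i where "x = tp i" by auto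
  then have "sp j \<otimes> x \<otimes> inv (sp j) = tp (th j * i) \<otimes> sp j \<otimes> inv (sp j)"
    by (simp add: sp_tp)
  also have "\<dots> = tp (th j * i)" by (simp add: m_assoc)
  finally show "sp j \<otimes> x \<otimes> inv (sp j) \<in> H" by simp
next
  show "inj_on (\<lambda>x. sp j \<otimes> x \<otimes> inv (sp j)) H"
    using H_sub by (auto simp: inj_on_def)
qed

lemma gm_sum_gel_left: "a \<in> carrier G \<Longrightarrow> A \<subseteq> carrier G \<Longrightarrow> e a ** (\<Sum>x\<in>A. e x) = (\<Sum>x\<in>A. e (a \<otimes> x))"
  by (auto simp: gm_sum_right gel_mult intro!: sum.cong)
lemma gm_sum_gel_right: "a \<in> carrier G \<Longrightarrow> A \<subseteq> carrier G \<Longrightarrow> (\<Sum>x\<in>A. e x) ** e a = (\<Sum>x\<in>A. e (x \<otimes> a))"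
  by (auto simp: gm_sum_left gel_mult intro!: sum.cong)

lemma N_left: "h \<in> H \<Longrightarrow> e h ** N = N"
proof -
  assume h: "h \<in> H"
  have hc: "h \<in> carrier G" using h H_sub by blast
  have "e h ** N = (\<Sum>x\<in>H. e (h \<otimes> x))" using hc H_sub by (simp add: N_H gm_sum_gel_left)
  also have "\<dots> = (\<Sum>x\<in>H. e x)" using sum.reindex_bij_betw[OF bij_H_l[OF h], of e] by simp
  finally show ?thesis by (simp add: N_H)
qed

lemma N_right: "h \<in> H \<Longrightarrow> N ** e h = N"
proof -
  assume h: "h \<in> H"
  have hc: "h \<in> carrier G" using h H_sub by blast
  have "N ** e h = (\<Sum>x\<in>H. e (x \<otimes> h))" using hc H_sub by (simp add: N_H gm_sum_gel_right)
  also have "\<dots> = (\<Sum>x\<in>H. e x)" using sum.reindex_bij_betw[OF bij_H_r[OF h], of e] by simp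
  finally show ?thesis by (simp add: N_H)
qed

lemma sp_N: "e (sp j) ** N = N ** e (sp j)"
proof -
  have "e (sp j) ** N = (\<Sum>x\<in>H. e (sp j \<otimes> x))" using H_sub by (simp add: N_H gm_sum_gel_left)
  also have "\<dots> = (\<Sum>x\<in>H. e ((sp j \<otimes> x \<otimes> inv (sp j)) \<otimes> sp j))"
    using H_sub by (intro sum.cong refl) (auto simp: m_assoc)
  also have "\<dots> = (\<Sum>y\<in>H. e (y \<otimes> sp j))"
    using sum.reindex_bij_betw[OF bij_H_conj[of j], of "\<lambda>y. e (y \<otimes> sp j)"] by simp
  also have "\<dots> = N ** e (sp j)" using H_sub by (simp add: N_H gm_sum_gel_right)
  finally show ?thesis .
qed

lemma NN: "N ** N = zsc (int d) N"
  by (simp add: N_def'[of] gm_sum_left N_left[unfolded N_def'] zsc_of_nat_sum)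

end


context S begin

lemma brN: "br k ** N = zsc (int k) N"
  by (simp add: gm_sum_left N_left zsc_of_nat_sum)
lemma Nbr: "N ** br k = zsc (int k) N"
  by (simp add: gm_sum_right N_right zsc_of_nat_sum)

lemma T_sigma: "T ** e \<sigma> = T"
proof -
  obtain n where n: "s = Suc n" using s_ge2 by (cases s) auto
  have "T ** e \<sigma> = (\<Sum>j<s. e (sp (Suc j)))"
    unfolding T_def' using sigma by (simp add: gm_sum_left gel_mult)
  also have "\<dots> = (\<Sum>j<n. e (sp (Suc j))) + e (sp s)" by (simp add: n del: nat_pow_Suc)
  also have "\<dots> = e (sp 0) + (\<Sum>j<n. e (sp (Suc j)))" by simp
  also have "\<dots> = T" unfolding Tsig_def n by (rule sum.lessThan_Suc_shift[symmetric, of "\<lambda>j. e (sp j)"])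
  finally show ?thesis .
qed

lemma NT: "N ** T = Al"
proof -
  have "N ** T = (\<Sum>i<d. \<Sum>j<s. e (tp i \<otimes> sp j))"
    unfolding N_def' T_def' by (simp add: gm_sum_left gm_sum_right gel_mult) (rule sum.swap)
  also have "\<dots> = (\<Sum>p\<in>{..<d} \<times> {..<s}. e ((\<lambda>(i, j). tp i \<otimes> sp j) p))"
    by (simp add: sum.cartesian_product) (intro sum.cong refl, auto)
  also have "\<dots> = Al"
    using sum.reindex_bij_betw[OF bij_gen, of e] by simp
  finally show ?thesis .
qed

lemma TN: "T ** N = Al"
proof -
  have "T ** N = (\<Sum>j<s. N ** e (sp j))" unfolding T_def' by (simp add: gm_sum_left sp_N)
  also have "\<dots> = N ** T" unfolding T_def' by (simp add: gm_sum_right)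
  finally show ?thesis by (simp add: NT)
qed

lemma Al_right: "h \<in> carrier G \<Longrightarrow> Al ** e h = Al"
proof -
  assume h: "h \<in> carrier G"
  have "Al ** e h = (\<Sum>x\<in>carrier G. e (x \<otimes> h))" using h by (simp add: gm_sum_gel_right)
  also have "\<dots> = Al" using sum.reindex_bij_betw[OF bij_r[OF h], of e] by simp
  finally show ?thesis .
qed

lemma Al_left: "h \<in> carrier G \<Longrightarrow> e h ** Al = Al"
proof -
  assume h: "h \<in> carrier G"
  have "e h ** Al = (\<Sum>x\<in>carrier G. e (h \<otimes> x))" using h by (simp add: gm_sum_gel_left)
  also have "\<dots> = Al" using sum.reindex_bij_betw[OF bij_l[OF h], of e] by simp
  finally show ?thesis .
qed

lemma Al_N: "Al ** N = zsc (int d) Al"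
  unfolding N_def' by (simp add: gm_sum_right Al_right zsc_of_nat_sum)

lemma tau_H[simp]: "\<tau> \<in> H" using tp_H[of 1] tau by simp
lemma tau_comm: "\<tau> \<otimes> tp i = tp i \<otimes> \<tau>"
  using tau by (metis nat_pow_Suc nat_pow_Suc2)

lemma om_ZG[simp]: "om \<in> ZG G" using tau by simp

lemma N_om: "N ** om = 0"
  using tau by (simp add: gm_diff_right gm_one_right N_right[OF tau_H])
lemma om_N: "om ** N = 0"
  using tau by (simp add: gm_diff_left gm_one_left N_left[OF tau_H])

lemma om_br: "om ** br k = e \<one> - e (tp k)"
proof -
  have "om ** br k = (\<Sum>i<k. e (tp i) - e (tp (Suc i)))"
    using tau by (simp add: gm_diff_left gm_one_left gm_sum_right gel_mult sum_subtractf tau_comm)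
  also have "\<dots> = e (tp 0) - e (tp k)" by (rule sum_lessThan_telescope')
  finally show ?thesis by simp
qed

lemma br_om: "br k ** om = e \<one> - e (tp k)"
proof -
  have "br k ** om = (\<Sum>i<k. e (tp i) - e (tp (Suc i)))"
    using tau by (simp add: gm_diff_right gm_one_right gm_sum_left gel_mult sum_subtractf)
  also have "\<dots> = e (tp 0) - e (tp k)" by (rule sum_lessThan_telescope')
  finally show ?thesis by simp
qed

lemma sp_om: "e (sp j) ** om = om ** br (th j) ** e (sp j)"
proof -
  have "e (sp j) ** om = e (sp j) - e (tp (th j) \<otimes> sp j)"
    using tau by (simp add: gm_diff_right gm_one_right gel_mult sp_tau)
  also have "\<dots> = (e \<one> - e (tp (th j))) ** e (sp j)"
    by (simp add: gm_diff_left gm_one_left gel_mult)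
  finally show ?thesis by (simp add: om_br)
qed

lemma T_om: "T ** om = (\<Sum>j<s. om ** br (th j) ** e (sp j))"
  unfolding T_def' by (simp add: gm_sum_left sp_om)

lemma tp_comm: "e (tp a) ** e (tp b) = e (tp b) ** e (tp a)"
  by (simp add: gel_mult tp_add add.commute)

lemma om_u: "om ** u = u ** om"
  using tau by (simp add: gm_diff_left gm_diff_right gm_one_left gm_one_right gel_mult tau_comm)

lemma u_N: "u ** N = N" by (simp add: N_left)

end


lemma sum_lessThan_add_split:
  fixes f :: "nat \<Rightarrow> 'b::comm_monoid_add"
  shows "(\<Sum>j<a + b. f j) = (\<Sum>j<a. f j) + (\<Sum>j<b. f (j + a))"
  by (induction b) (simp_all add: add_ac)

lemma sum_int_lessThan: "2 * (\<Sum>i<n. int i) = int n * (int n - 1)"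
  by (induction n) (simp_all add: algebra_simps)

context S begin

abbreviation a where "a i \<equiv> (int d - 1) div 2 - int i"
abbreviation P where "P \<equiv> (\<Sum>i<d. zsc (a i) (e (tp i)))"

lemma P_ZG[simp]: "P \<in> ZG G" by simp
lemma u_ZG[simp]: "u \<in> ZG G" by simp

lemma C_def': "Cel G \<tau> \<sigma> d s = P ** u ** T"
  by (simp add: Cel_def Tsig_def)

lemma zsc_sum_left: "(\<Sum>i\<in>A. zsc (f i) x) = zsc (\<Sum>i\<in>A. f i) x"
  by (rule ext) (simp add: sum_fun_apply zsc_def sum_distrib_right)

lemma sum_a: "(\<Sum>i<d. a i) = 0"
proof -
  have X: "2 * ((int d - 1) div 2) = int d - 1" using d_odd by presburger
  have e1: "(\<Sum>i<d. a i) = int d * ((int d - 1) div 2) - (\<Sum>i<d. int i)"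
    by (simp add: sum_subtractf)
  have "2 * (\<Sum>i<d. a i) = int d * (2 * ((int d - 1) div 2)) - 2 * (\<Sum>i<d. int i)"
    unfolding e1 by (simp add: algebra_simps)
  also have "\<dots> = int d * (int d - 1) - int d * (int d - 1)" unfolding X sum_int_lessThan ..
  finally show ?thesis by simp
qed

lemma C_N: "Cel G \<tau> \<sigma> d s ** N = 0"
proof -
  have "Cel G \<tau> \<sigma> d s ** N = P ** (u ** Al)" by (simp add: C_def' gm_assoc TN)
  also have "\<dots> = P ** Al" by (simp add: Al_left)
  also have "\<dots> = (\<Sum>i<d. zsc (a i) Al)" by (simp add: gm_sum_left gm_zsc_left Al_left)
  also have "\<dots> = 0" by (simp add: zsc_sum_left sum_a)
  finally show ?thesis .
qed

lemma P_u: "P ** u = u ** P"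
  by (simp add: gm_sum_left gm_sum_right gm_zsc_left gm_zsc_right tp_comm)

lemma P_om: "P ** om = zsc (int d) (e \<one>) - N"
proof -
  obtain n where n: "d = Suc n" using d_ge3 by (cases d) auto
  have P_exp: "P = zsc (a 0) (e \<one>) + (\<Sum>i<n. zsc (a (Suc i)) (e (tp (Suc i))))"
    unfolding n by (subst sum.lessThan_Suc_shift) simp
  have Pt_exp: "P ** e \<tau> = (\<Sum>i<n. zsc (a i) (e (tp (Suc i)))) + zsc (a n) (e \<one>)"
  proof -
    have "P ** e \<tau> = (\<Sum>i<d. zsc (a i) (e (tp (Suc i))))"
      using tau by (simp add: gm_sum_left gm_zsc_left gel_mult)
    also have "\<dots> = (\<Sum>i<n. zsc (a i) (e (tp (Suc i)))) + zsc (a n) (e (tp d))"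
      by (simp add: n del: nat_pow_Suc)
    finally show ?thesis by simp
  qed
  have N_exp: "N = e \<one> + (\<Sum>i<n. e (tp (Suc i)))"
    unfolding Ttau_def n by (subst sum.lessThan_Suc_shift) simp
  have diff: "(\<Sum>i<n. zsc (a (Suc i)) (e (tp (Suc i)))) - (\<Sum>i<n. zsc (a i) (e (tp (Suc i))))
      = - (\<Sum>i<n. e (tp (Suc i)))"
    by (rule ext) (simp add: sum_fun_apply zsc_def sum_subtractf[symmetric] sum_negf[symmetric] algebra_simps)
  have a0n: "a 0 - a n = int d - 1" using n by simp
  have "P ** om = P - P ** e \<tau>" using tau by (simp add: gm_diff_right gm_one_right)
  also have "\<dots> = zsc (int d) (e \<one>) - N"
  proof (rule ext)
    fix g
    have dg: "(\<Sum>i<n. zsc (a (Suc i)) (e (tp (Suc i)))) g - (\<Sum>i<n. zsc (a i) (e (tp (Suc i)))) g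
      = - (\<Sum>i<n. e (tp (Suc i))) g" using fun_cong[OF diff, of g] by simp
    have "a 0 * e \<one> g - a n * e \<one> g = (int d - 1) * e \<one> g"
      using a0n by (metis left_diff_distrib)
    then show "(P - P ** e \<tau>) g = (zsc (int d) (e \<one>) - N) g"
      unfolding Pt_exp apply (subst P_exp) apply (subst N_exp)
      using dg by (simp add: zsc_apply algebra_simps)
  qed
  finally show ?thesis .
qed

end


context S begin

lemma key:
  assumes k: "k \<le> d"
  shows "e (sp mm) ** u ** br k = (N - u ** br (d - k)) ** e (sp mm)"
proof -
  have "e (sp mm) ** u ** br k = (\<Sum>i<k. e (sp mm \<otimes> tp (cc + i)))"
    by (simp add: gm_sum_right gel_mult tp_add m_assoc)
  also have "\<dots> = (\<Sum>i<k. e (tp (cc + (d - 1 - i))) ** e (sp mm))"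
  proof (intro sum.cong refl)
    fix i assume "i \<in> {..<k}"
    then have "inv (tp (cc+i)) = tp (cc + (d-1-i))" using k by (intro inv_tp_c) auto
    then show "e (sp mm \<otimes> tp (cc + i)) = e (tp (cc + (d - 1 - i))) ** e (sp mm)"
      by (simp only: half_tp gel_mult[OF tp_c sp_c])
  qed
  also have "\<dots> = (\<Sum>i<k. e (tp (cc + (d - 1 - i)))) ** e (sp mm)"
    by (simp only: gm_sum_left)
  also have "(\<Sum>i<k. e (tp (cc + (d - 1 - i)))) = (\<Sum>l\<in>{d-k..<d}. e (tp (cc + l)))"
    by (rule sum.reindex_bij_witness[where i="\<lambda>l. d - 1 - l" and j="\<lambda>i. d - 1 - i"]) (use k in auto)
  also have "\<dots> = N - u ** br (d - k)"
  proof -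
    have "N = u ** N" by (rule u_N[symmetric])
    also have "\<dots> = (\<Sum>l<d. e (tp (cc + l)))" by (simp add: N_def' gm_sum_right gel_mult tp_add)
    also have "\<dots> = (\<Sum>l<d - k. e (tp (cc + l))) + (\<Sum>l\<in>{d-k..<d}. e (tp (cc + l)))"
      using k by (simp add: lessThan_atLeast0 sum.atLeastLessThan_concat)
    also have "(\<Sum>l<d - k. e (tp (cc + l))) = u ** br (d - k)"
      by (simp add: gm_sum_right gel_mult tp_add)
    finally show ?thesis by (simp only: add_diff_cancel_left')
  qed
  finally show ?thesis .
qed

abbreviation W where "W \<equiv> (\<Sum>j<s. br (th j) ** e (sp j))"
abbreviation V where "V \<equiv> (\<Sum>j<mm. e (sp (j + mm)))"

lemma s_mm: "s = mm + mm" using s_even by presburger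

lemma B_form: "Bel G \<tau> \<sigma> d s = u ** W - N ** V"
proof -
  let ?S = "\<Sum>j<mm. br (th j) ** e (sp j)"
  let ?R = "\<Sum>j<mm. u ** (br (th (j + mm)) ** e (sp (j + mm)))"
  have B: "Bel G \<tau> \<sigma> d s = u ** ?S - e (sp mm) ** u ** ?S"
    unfolding Bel_def by (simp only: gm_diff_left gm_one_left u_ZG)
  have "e (sp mm) ** u ** ?S = (\<Sum>j<mm. (e (sp mm) ** u ** br (th j)) ** e (sp j))"
    by (simp only: gm_sum_right[of _ "\<lambda>j. br (th j) ** e (sp j)"]) (simp only: gm_assoc)
  also have "\<dots> = (\<Sum>j<mm. (N - u ** br (d - th j)) ** (e (sp mm) ** e (sp j)))"
  proof (intro sum.cong refl)
    fix j
    have "th j \<le> d" using th_range[of j] by simp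
    then show "(e (sp mm) ** u ** br (th j)) ** e (sp j) = (N - u ** br (d - th j)) ** (e (sp mm) ** e (sp j))"
      by (subst key[OF \<open>th j \<le> d\<close>]) (simp only: gm_assoc)
  qed
  also have "\<dots> = (\<Sum>j<mm. N ** e (sp (j + mm)) - u ** (br (th (j + mm)) ** e (sp (j + mm))))"
  proof (intro sum.cong refl)
    fix j
    have "e (sp mm) ** e (sp j) = e (sp (j + mm))" by (simp only: gel_mult[OF sp_c sp_c] sp_add add.commute)
    then show "(N - u ** br (d - th j)) ** (e (sp mm) ** e (sp j)) =
      N ** e (sp (j + mm)) - u ** (br (th (j + mm)) ** e (sp (j + mm)))"
      by (simp only: th_shift gm_diff_left gm_assoc)
  qed
  also have "\<dots> = N ** V - ?R"
    by (simp only: sum_subtractf gm_sum_right)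
  finally have 1: "e (sp mm) ** u ** ?S = N ** V - ?R" .
  have 2: "u ** W = u ** ?S + ?R"
    by (subst s_mm) (simp only: sum_lessThan_add_split gm_sum_right gm_add_right)
  show ?thesis unfolding B 1 2 by simp
qed

lemma om_B: "om ** Bel G \<tau> \<sigma> d s = u ** (T ** om)"
proof -
  have "om ** Bel G \<tau> \<sigma> d s = om ** (u ** W) - om ** (N ** V)"
    by (simp only: B_form gm_diff_right)
  also have "om ** (N ** V) = 0" by (simp only: gm_assoc[symmetric] om_N gm_zero_left)
  also have "om ** (u ** W) = u ** (om ** W)" by (simp only: om_u gm_assoc[symmetric])
  also have "om ** W = T ** om" by (simp only: T_om gm_sum_right[of _ "\<lambda>j. br (th j) ** e (sp j)"]) (simp only: gm_assoc)
  finally show ?thesis by (simp only: diff_zero)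
qed

definition zz where "zz = e (inv (tp cc)) ** om"

lemma zz_ZG[simp]: "zz \<in> ZG G" by (simp add: zz_def)

lemma I1: "zz ** Bel G \<tau> \<sigma> d s = T ** om"
proof -
  have "zz ** Bel G \<tau> \<sigma> d s = (e (inv (tp cc)) ** u) ** (T ** om)"
    by (simp only: zz_def gm_assoc om_B)
  also have "e (inv (tp cc)) ** u = e \<one>" by (simp add: gel_mult)
  also have "e \<one> ** (T ** om) = T ** om" by (rule gm_one_left) simp
  finally show ?thesis .
qed

lemma I2_term: "P ** u ** (om ** br (th j) ** e (sp j)) =
   zsc (int d) (u ** (br (th j) ** e (sp j))) - zsc (int (th j)) (N ** e (sp j))"
proof -
  let ?X = "br (th j) ** e (sp j)"
  have "P ** u ** (om ** br (th j) ** e (sp j)) = u ** ((P ** om) ** ?X)"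
    by (simp only: P_u gm_assoc)
  also have "\<dots> = u ** (zsc (int d) ?X - N ** ?X)"
    by (simp only: P_om gm_diff_left gm_zsc_left gm_one_left br_ZG gm_ZG)
  also have "N ** ?X = zsc (int (th j)) (N ** e (sp j))"
    by (simp only: gm_assoc[symmetric] Nbr gm_zsc_left)
  also have "u ** (zsc (int d) ?X - zsc (int (th j)) (N ** e (sp j))) =
      zsc (int d) (u ** ?X) - zsc (int (th j)) (N ** e (sp j))"
    by (simp only: gm_diff_right gm_zsc_right gm_assoc[symmetric] u_N)
  finally show ?thesis .
qed

lemma I2: "Cel G \<tau> \<sigma> d s ** om + Bel G \<tau> \<sigma> d s ** N = zsc (int d) (Bel G \<tau> \<sigma> d s)"
proof -
  let ?X = "\<Sum>j<s. zsc (int (th j)) (N ** e (sp j))"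
  have "Cel G \<tau> \<sigma> d s ** om = P ** u ** (T ** om)" by (simp only: C_def' gm_assoc)
  also have "\<dots> = (\<Sum>j<s. P ** u ** (om ** br (th j) ** e (sp j)))"
    by (simp only: T_om gm_sum_right)
  also have "\<dots> = (\<Sum>j<s. zsc (int d) (u ** (br (th j) ** e (sp j))) - zsc (int (th j)) (N ** e (sp j)))"
    by (simp only: I2_term)
  also have "\<dots> = zsc (int d) (u ** W) - ?X"
    by (simp only: sum_subtractf zsc_sum gm_sum_right)
  finally have C: "Cel G \<tau> \<sigma> d s ** om = zsc (int d) (u ** W) - ?X" .
  have WN: "W ** N = ?X"
  proof -
    have "W ** N = (\<Sum>j<s. br (th j) ** (e (sp j) ** N))" by (simp only: gm_sum_left gm_assoc)
    also have "\<dots> = (\<Sum>j<s. (br (th j) ** N) ** e (sp j))" by (simp only: sp_N gm_assoc)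
    also have "\<dots> = ?X" by (simp only: brN gm_zsc_left)
    finally show ?thesis .
  qed
  have uX: "u ** ?X = ?X"
    by (simp only: gm_sum_right gm_zsc_right gm_assoc[symmetric] u_N)
  have VN: "V ** N = N ** V"
    by (simp only: gm_sum_left gm_sum_right sp_N)
  have BN: "Bel G \<tau> \<sigma> d s ** N = ?X - zsc (int d) (N ** V)"
  proof -
    have "Bel G \<tau> \<sigma> d s ** N = u ** (W ** N) - N ** (V ** N)"
      by (simp only: B_form gm_diff_left gm_assoc)
    also have "\<dots> = ?X - zsc (int d) (N ** V)"
      by (simp only: WN uX VN gm_assoc[symmetric] NN gm_zsc_left)
    finally show ?thesis .
  qed
  have "zsc (int d) (Bel G \<tau> \<sigma> d s) = zsc (int d) (u ** W) - zsc (int d) (N ** V)"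
    by (simp only: B_form zsc_diff)
  then show ?thesis unfolding C BN by simp
qed

end


context S begin

abbreviation BB where "BB \<equiv> Bel G \<tau> \<sigma> d s"
abbreviation CC where "CC \<equiv> Cel G \<tau> \<sigma> d s"

lemma BB_ZG[simp]: "BB \<in> ZG G" by (simp add: Bel_def)
lemma CC_ZG[simp]: "CC \<in> ZG G" by (simp add: Cel_def)

lemma KL:
  assumes x: "x \<in> ZG G" and inv: "\<And>g. g \<in> carrier G \<Longrightarrow> x (g \<otimes> \<sigma>) = x g"
    and dv: "\<And>g. g \<in> carrier G \<Longrightarrow> (n::int) dvd (x g - x (g \<otimes> inv \<tau>))"
  shows "g \<in> carrier G \<Longrightarrow> n dvd (x g - x \<one>)"
proof -
  have A: "x (tp i \<otimes> sp j) = x (tp i)" for i j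
  proof (induction j)
    case (Suc j)
    have "tp i \<otimes> sp (Suc j) = (tp i \<otimes> sp j) \<otimes> \<sigma>" using sigma by (simp add: m_assoc)
    then show ?case using Suc inv[of "tp i \<otimes> sp j"] by simp
  qed simp
  have Bq: "n dvd (x (tp i) - x \<one>)" for i
  proof (induction i)
    case (Suc i)
    have "n dvd (x (tp (Suc i)) - x (tp (Suc i) \<otimes> inv \<tau>))" by (rule dv) (use tau in simp)
    moreover have "tp (Suc i) \<otimes> inv \<tau> = tp i" using tau by (simp add: m_assoc)
    ultimately have "n dvd (x (tp (Suc i)) - x (tp i))" by simp
    moreover have "x (tp (Suc i)) - x \<one> = (x (tp (Suc i)) - x (tp i)) + (x (tp i) - x \<one>)" by simp
    ultimately show ?case using Suc by (metis dvd_add)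
  qed simp
  assume "g \<in> carrier G"
  then obtain i j where "g = tp i \<otimes> sp j" using gen by auto
  then show ?thesis using A Bq by simp
qed

lemma M2_inv: "g \<in> carrier G \<Longrightarrow> (y ** T) (g \<otimes> \<sigma>) = (y ** T) g"
proof -
  assume g: "g \<in> carrier G"
  have "(y ** T) (g \<otimes> \<sigma>) = ((y ** T) ** e \<sigma>) (g \<otimes> \<sigma>)" by (simp only: gm_assoc T_sigma)
  also have "\<dots> = (y ** T) (g \<otimes> \<sigma> \<otimes> inv \<sigma>)" using g sigma by (simp add: gm_gel_right_apply)
  also have "g \<otimes> \<sigma> \<otimes> inv \<sigma> = g" using g sigma by (simp add: m_assoc)
  finally show ?thesis .
qed

lemma om_apply: "x \<in> ZG G \<Longrightarrow> g \<in> carrier G \<Longrightarrow> (x ** om) g = x g - x (g \<otimes> inv \<tau>)"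
  using tau by (simp add: gm_diff_right gm_one_right gm_gel_right_apply)

lemma SL:
  assumes x: "x \<in> ZG G" and inv: "\<And>g. g \<in> carrier G \<Longrightarrow> x (g \<otimes> \<sigma>) = x g"
  shows "\<exists>y\<in>ZG G. x = y ** T"
proof -
  have A: "x (tp i \<otimes> sp j) = x (tp i)" for i j
  proof (induction j)
    case (Suc j)
    have "tp i \<otimes> sp (Suc j) = (tp i \<otimes> sp j) \<otimes> \<sigma>" using sigma by (simp add: m_assoc)
    then show ?case using Suc inv[of "tp i \<otimes> sp j"] by simp
  qed simp
  let ?y = "\<Sum>i<d. zsc (x (tp i)) (e (tp i))"
  have "?y ** T = (\<Sum>i<d. \<Sum>j<s. zsc (x (tp i \<otimes> sp j)) (e (tp i \<otimes> sp j)))"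
    unfolding T_def' by (simp add: gm_sum_left gm_sum_right gm_zsc_left gel_mult A) (rule sum.swap)
  also have "\<dots> = (\<Sum>p\<in>{..<d} \<times> {..<s}. (\<lambda>g. zsc (x g) (e g)) ((\<lambda>(i, j). tp i \<otimes> sp j) p))"
    by (simp add: sum.cartesian_product) (intro sum.cong refl, auto)
  also have "\<dots> = (\<Sum>g\<in>carrier G. zsc (x g) (e g))"
    by (rule sum.reindex_bij_betw[OF bij_gen])
  also have "\<dots> = x" using ZG_expand[OF x] by simp
  finally show ?thesis by (intro bexI[of _ ?y]) auto
qed

lemma const_Al: "x \<in> ZG G \<Longrightarrow> (\<And>g. g \<in> carrier G \<Longrightarrow> x g = x \<one>) \<Longrightarrow> x = zsc (x \<one>) Al"
proof (rule ext)
  fix g assume x: "x \<in> ZG G" and c: "\<And>g. g \<in> carrier G \<Longrightarrow> x g = x \<one>"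
  show "x g = zsc (x \<one>) Al g"
  proof (cases "g \<in> carrier G")
    case True then show ?thesis using c[OF True] by (simp only: zsc_apply Al_apply mult_1_right)
  next
    case False
    then have "x g = 0" using x by (simp add: ZG_def)
    then show ?thesis using False using Al_out[OF False] by (simp only: zsc_apply mult_0_right)
  qed
qed

lemma Al_om: "Al ** om = 0"
proof -
  have "Al ** om = (T ** N) ** om" by (simp only: TN)
  also have "\<dots> = T ** (N ** om)" by (rule gm_assoc)
  also have "\<dots> = 0" by (simp only: N_om gm_zero_right)
  finally show ?thesis .
qed

lemma ker_om: "x = y ** T \<Longrightarrow> x ** om = 0 \<Longrightarrow> x = zsc (x \<one>) Al"
proof -
  assume x: "x = y ** T" and z: "x ** om = 0"
  have xZ: "x \<in> ZG G" unfolding x by (rule gm_ZG)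
  have xi: "x (g \<otimes> \<sigma>) = x g" if "g \<in> carrier G" for g
    unfolding x by (rule M2_inv[OF that])
  have "x g = x \<one>" if g: "g \<in> carrier G" for g
  proof -
    have "(0::int) dvd (x g - x \<one>)"
    proof (rule KL[where x=x, OF xZ xi])
      show "(0::int) dvd (x g - x (g \<otimes> inv \<tau>))" if g: "g \<in> carrier G" for g
      proof -
        have "(x ** om) g = x g - x (g \<otimes> inv \<tau>)" by (rule om_apply[OF xZ g])
        moreover have "(x ** om) g = 0" unfolding z by (rule zero_fun_apply)
        ultimately show ?thesis by (simp only: dvd_0_left_iff)
      qed
    qed (use g in auto)
    then show ?thesis by (simp only: dvd_0_left_iff)
  qed
  then show ?thesis by (rule const_Al[OF xZ])
qed

lemma zsc_zero[simp]: "zsc a1 0 = 0"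
  by (simp add: zsc_def zero_fun_def)
lemma zsc_neg: "zsc (- a1) x = - zsc a1 x"
  by (rule ext) (simp add: zsc_def)

lemma SAT:
  assumes X: "Q0 = R0 ** T" and f: "f \<in> ZG G" and eq: "Q0 ** om = zsc (int d) f"
  shows "\<exists>Y'\<in>ZG G. f = Y' ** T ** om"
proof -
  have XZ: "Q0 \<in> ZG G" unfolding X by (rule gm_ZG)
  have Xi: "Q0 (g \<otimes> \<sigma>) = Q0 g" if "g \<in> carrier G" for g
    unfolding X by (rule M2_inv[OF that])
  have dv: "int d dvd (Q0 g - Q0 \<one>)" if g: "g \<in> carrier G" for g
  proof (rule KL[where x=Q0, OF XZ Xi])
    show "int d dvd (Q0 g - Q0 (g \<otimes> inv \<tau>))" if g: "g \<in> carrier G" for g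
    proof -
      have "(Q0 ** om) g = Q0 g - Q0 (g \<otimes> inv \<tau>)" by (rule om_apply[OF XZ g])
      moreover have "(Q0 ** om) g = int d * f g" unfolding eq by (rule zsc_apply)
      ultimately show ?thesis by (metis dvd_triv_left)
    qed
  qed (use g in auto)
  define Q1 where "Q1 = (\<lambda>g. if g \<in> carrier G then (Q0 g - Q0 \<one>) div int d else 0)"
  have X'Z: "Q1 \<in> ZG G" by (simp add: Q1_def ZG_def)
  have X'inv: "Q1 (g \<otimes> \<sigma>) = Q1 g" if "g \<in> carrier G" for g
  proof -
    have "g \<otimes> \<sigma> \<in> carrier G" using that sigma by simp
    then show ?thesis using that by (simp only: Q1_def if_True Xi[OF that])
  qed
  obtain Y' where Y': "Y' \<in> ZG G" "Q1 = Y' ** T" using SL[OF X'Z X'inv] by blast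
  have dX': "zsc (int d) Q1 = Q0 - zsc (Q0 \<one>) Al"
  proof (rule ext)
    fix g show "zsc (int d) Q1 g = (Q0 - zsc (Q0 \<one>) Al) g"
    proof (cases "g \<in> carrier G")
      case True
      have "zsc (int d) Q1 g = int d * ((Q0 g - Q0 \<one>) div int d)" by (simp add: Q1_def zsc_apply True)
      also have "\<dots> = Q0 g - Q0 \<one>" using dv[OF True] by simp
      also have "\<dots> = (Q0 - zsc (Q0 \<one>) Al) g" by (simp only: diff_fun_apply' zsc_apply Al_apply[OF True] mult_1_right)
      finally show ?thesis .
    next
      case False
      have "Q0 g = 0" using XZ False by (simp add: ZG_def)
      then show ?thesis using False by (simp only: Q1_def zsc_apply diff_fun_apply' Al_out[OF False] if_False mult_0_right diff_zero)
    qed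
  qed
  have "zsc (int d) (Q1 ** om) = zsc (int d) f"
  proof -
    have "zsc (int d) (Q1 ** om) = (zsc (int d) Q1) ** om" by (simp only: gm_zsc_left)
    also have "\<dots> = Q0 ** om - zsc (Q0 \<one>) (Al ** om)" by (simp only: dX' gm_diff_left gm_zsc_left)
    also have "\<dots> = zsc (int d) f" by (simp only: Al_om eq zsc_zero diff_zero)
    finally show ?thesis .
  qed
  moreover have "int d \<noteq> 0" using d_ge3 by simp
  ultimately have "Q1 ** om = f" using zsc_cancel by blast
  then show ?thesis using Y' by auto
qed

lemma Al_zsc_eq: "zsc a1 Al = zsc b1 Al \<Longrightarrow> a1 = b1"
proof -
  assume h: "zsc a1 Al = zsc b1 Al"
  have "zsc a1 Al \<one> = a1" "zsc b1 Al \<one> = b1" by (simp_all only: zsc_apply Al_apply[OF one_closed] mult_1_right)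
  then show ?thesis using h by metis
qed

lemma WD0: "w \<in> ZG G \<Longrightarrow> w ** BB = 0 \<Longrightarrow> w ** CC = 0"
proof -
  assume w: "w \<in> ZG G" and wB: "w ** BB = 0"
  let ?Z = "w ** CC"
  have Z: "?Z = (w ** P ** u) ** T" by (simp only: C_def' gm_assoc)
  have "?Z ** om = w ** (CC ** om)" by (simp only: gm_assoc)
  also have "CC ** om = zsc (int d) BB - BB ** N" using I2 by (simp add: algebra_simps)
  also have "w ** (zsc (int d) BB - BB ** N) = zsc (int d) (w ** BB) - (w ** BB) ** N"
    by (simp only: gm_diff_right gm_zsc_right gm_assoc)
  finally have "?Z ** om = 0" by (simp only: wB zsc_zero gm_zero_left diff_zero)
  then have Zc: "?Z = zsc (?Z \<one>) Al" using ker_om[OF Z] by blast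
  have "?Z ** N = 0" by (simp only: gm_assoc C_N gm_zero_right)
  then have "zsc (?Z \<one>) (zsc (int d) Al) = zsc 0 Al"
    using Zc by (metis gm_zsc_left Al_N zsc_0)
  then have "zsc (?Z \<one> * int d) Al = zsc 0 Al" by (simp only: zsc_zsc)
  then have "?Z \<one> * int d = 0" by (rule Al_zsc_eq)
  then have "?Z \<one> = 0" using d_ge3 by simp
  then show ?thesis using Zc by (simp add: zsc_def zero_fun_def)
qed

lemma WD: "x \<in> ZG G \<Longrightarrow> y \<in> ZG G \<Longrightarrow> x ** BB = y ** BB \<Longrightarrow> x ** CC = y ** CC"
  using WD0[of "x - y"] by (simp add: gm_diff_left)

lemma h2_val: "x \<in> ZG G \<Longrightarrow> h2 G \<tau> \<sigma> d s (x ** BB) = x ** CC"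
proof -
  assume x: "x \<in> ZG G"
  let ?Q = "\<lambda>z. \<exists>x'\<in>ZG G. x ** BB = x' ** BB \<and> z = x' ** CC"
  have "?Q (x ** CC)" using x by blast
  then have "?Q (SOME z. ?Q z)" by (rule someI[of ?Q])
  then obtain x' where "x' \<in> ZG G" "x ** BB = x' ** BB" "(SOME z. ?Q z) = x' ** CC" by blast
  then show ?thesis unfolding h2_def using WD[OF x] by simp
qed

lemma I3: "T ** N + zz ** CC = zsc (int d) T"
proof -
  let ?Z = "zz ** CC - zsc (int d) T"
  have Z: "?Z = (zz ** P ** u - zsc (int d) (e \<one>)) ** T"
    by (simp only: C_def' gm_assoc gm_diff_left gm_zsc_left gm_one_left T_ZG)
  have "?Z ** om = zz ** (CC ** om) - zsc (int d) (T ** om)"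
    by (simp only: gm_diff_left gm_zsc_left gm_assoc)
  also have "CC ** om = zsc (int d) BB - BB ** N" using I2 by (simp add: algebra_simps)
  also have "zz ** (zsc (int d) BB - BB ** N) = zsc (int d) (T ** om) - T ** (om ** N)"
    by (simp only: gm_diff_right gm_zsc_right gm_assoc[symmetric] I1)
  finally have "?Z ** om = 0" by (simp only: om_N gm_zero_right diff_zero diff_self)
  then have Zc: "?Z = zsc (?Z \<one>) Al" using ker_om[OF Z] by blast
  have "?Z ** N = zz ** (CC ** N) - zsc (int d) (T ** N)"
    by (simp only: gm_diff_left gm_zsc_left gm_assoc)
  also have "\<dots> = zsc (- int d) Al" by (simp only: C_N TN gm_zero_right zsc_neg diff_0)
  finally have "zsc (?Z \<one>) (Al ** N) = zsc (- int d) Al" using Zc by (metis gm_zsc_left)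
  then have "zsc (?Z \<one> * int d) Al = zsc (- int d) Al" by (simp add: Al_N)
  then have "?Z \<one> * int d = - int d" by (rule Al_zsc_eq)
  then have "(?Z \<one> + 1) * int d = 0" by (simp add: algebra_simps)
  then have "?Z \<one> + 1 = 0" using d_ge3 by simp
  then have "?Z \<one> = -1" by linarith
  then have h: "zz ** CC - zsc (int d) T = - (T ** N)" using Zc TN by (simp only: zsc_neg zsc_1)
  show ?thesis
  proof (rule ext)
    fix g show "(T ** N + zz ** CC) g = zsc (int d) T g"
      using fun_cong[OF h, of g] by simp
  qed
qed

end


context S begin

lemma M1_eq: "M1 G \<tau> \<sigma> d s = {y ** (T ** N) | y. y \<in> ZG G}" by (simp add: M1_def lideal_def)
lemma M2_eq: "M2 G \<tau> \<sigma> d s = {y ** T | y. y \<in> ZG G}" by (simp add: M2_def lideal_def)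
lemma M3_eq: "M3 G \<tau> \<sigma> d s = {y ** BB | y. y \<in> ZG G}" by (simp add: M3_def lideal_def)
lemma M4_eq: "M4 G \<tau> \<sigma> d s = {y ** (BB ** N) | y. y \<in> ZG G}" by (simp add: M4_def lideal_def)
lemma d2_eq: "d2 G \<tau> x = x ** om" by (simp add: d2_def)
lemma d3_eq: "d3 G \<tau> d x = x ** N" by (simp add: d3_def)
lemma h1_eq: "h1 G \<tau> d x = x ** N" by (simp add: h1_def)

lemma M1_in_M2: "x \<in> M1 G \<tau> \<sigma> d s \<Longrightarrow> x \<in> M2 G \<tau> \<sigma> d s"
proof -
  assume "x \<in> M1 G \<tau> \<sigma> d s"
  then obtain y where y: "y \<in> ZG G" "x = y ** (T ** N)" by (auto simp: M1_eq)
  have "x = (y ** N) ** T" by (simp only: y(2) gm_assoc TN NT)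
  then show ?thesis by (auto simp: M2_eq)
qed

lemma p1a: "d1 ` M1 G \<tau> \<sigma> d s \<subseteq> M2 G \<tau> \<sigma> d s"
  using M1_in_M2 by (auto simp: d1_def)

lemma p1b: "d2 G \<tau> ` M2 G \<tau> \<sigma> d s \<subseteq> M3 G \<tau> \<sigma> d s"
proof
  fix x assume "x \<in> d2 G \<tau> ` M2 G \<tau> \<sigma> d s"
  then obtain y where y: "y \<in> ZG G" "x = (y ** T) ** om" by (auto simp: M2_eq d2_eq)
  have "x = (y ** zz) ** BB" by (simp only: y(2) gm_assoc I1)
  then show "x \<in> M3 G \<tau> \<sigma> d s" by (auto simp: M3_eq)
qed

lemma p1c: "d3 G \<tau> d ` M3 G \<tau> \<sigma> d s = M4 G \<tau> \<sigma> d s"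
proof
  show "d3 G \<tau> d ` M3 G \<tau> \<sigma> d s \<subseteq> M4 G \<tau> \<sigma> d s"
    by (auto simp: M3_eq M4_eq d3_eq gm_assoc)
  show "M4 G \<tau> \<sigma> d s \<subseteq> d3 G \<tau> d ` M3 G \<tau> \<sigma> d s"
  proof
    fix x assume "x \<in> M4 G \<tau> \<sigma> d s"
    then obtain y where y: "y \<in> ZG G" "x = y ** (BB ** N)" by (auto simp: M4_eq)
    have "x = d3 G \<tau> d (y ** BB)" by (simp only: y(2) d3_eq gm_assoc)
    moreover have "y ** BB \<in> M3 G \<tau> \<sigma> d s" using y(1) by (auto simp: M3_eq)
    ultimately show "x \<in> d3 G \<tau> d ` M3 G \<tau> \<sigma> d s" by blast
  qed
qed

lemma p1d: "inj_on d1 (M1 G \<tau> \<sigma> d s)" by (simp add: d1_def inj_on_def)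

lemma p1e: "{x \<in> M2 G \<tau> \<sigma> d s. d2 G \<tau> x = 0} = d1 ` M1 G \<tau> \<sigma> d s"
proof
  show "{x \<in> M2 G \<tau> \<sigma> d s. d2 G \<tau> x = 0} \<subseteq> d1 ` M1 G \<tau> \<sigma> d s"
  proof
    fix x assume "x \<in> {x \<in> M2 G \<tau> \<sigma> d s. d2 G \<tau> x = 0}"
    then obtain y where y: "y \<in> ZG G" "x = y ** T" and z: "x ** om = 0" by (auto simp: M2_eq d2_eq)
    have "x = zsc (x \<one>) Al" using ker_om[OF y(2) z] .
    also have "\<dots> = zsc (x \<one>) (e \<one>) ** (T ** N)"
      by (simp only: gm_zsc_left TN gm_one_left Al_ZG)
    finally have "x \<in> M1 G \<tau> \<sigma> d s" by (auto simp: M1_eq)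
    then show "x \<in> d1 ` M1 G \<tau> \<sigma> d s" by (simp add: d1_def)
  qed
  show "d1 ` M1 G \<tau> \<sigma> d s \<subseteq> {x \<in> M2 G \<tau> \<sigma> d s. d2 G \<tau> x = 0}"
  proof
    fix x assume x: "x \<in> d1 ` M1 G \<tau> \<sigma> d s"
    then have "x \<in> M1 G \<tau> \<sigma> d s" by (simp add: d1_def)
    then obtain y where y: "y \<in> ZG G" "x = y ** (T ** N)" by (auto simp: M1_eq)
    have "x ** om = 0" by (simp only: y(2) gm_assoc N_om gm_zero_right)
    then show "x \<in> {x \<in> M2 G \<tau> \<sigma> d s. d2 G \<tau> x = 0}"
      using M1_in_M2[OF \<open>x \<in> M1 G \<tau> \<sigma> d s\<close>] by (simp add: d2_eq)
  qed
qed

lemma CC_om: "CC ** om = zsc (int d) BB - BB ** N"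
  using I2 by (simp add: algebra_simps)

lemma p1f: "{x \<in> M3 G \<tau> \<sigma> d s. d3 G \<tau> d x = 0} = d2 G \<tau> ` M2 G \<tau> \<sigma> d s"
proof
  show "{x \<in> M3 G \<tau> \<sigma> d s. d3 G \<tau> d x = 0} \<subseteq> d2 G \<tau> ` M2 G \<tau> \<sigma> d s"
  proof
    fix x assume "x \<in> {x \<in> M3 G \<tau> \<sigma> d s. d3 G \<tau> d x = 0}"
    then obtain y where y: "y \<in> ZG G" "x = y ** BB" and z: "x ** N = 0" by (auto simp: M3_eq d3_eq)
    have eq: "(y ** P ** u) ** T ** om = zsc (int d) x"
    proof -
      have "(y ** P ** u) ** T ** om = y ** (CC ** om)" by (simp only: C_def' gm_assoc)
      also have "\<dots> = zsc (int d) (y ** BB) - (y ** BB) ** N"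
        by (subst CC_om) (simp only: gm_diff_right gm_zsc_right gm_assoc)
      also have "\<dots> = zsc (int d) x" by (simp only: y(2)[symmetric] z diff_zero)
      finally show ?thesis .
    qed
    obtain Y' where "Y' \<in> ZG G" "x = Y' ** T ** om"
      using SAT[OF refl _ eq] y by auto
    then show "x \<in> d2 G \<tau> ` M2 G \<tau> \<sigma> d s" by (auto simp: M2_eq d2_eq)
  qed
  show "d2 G \<tau> ` M2 G \<tau> \<sigma> d s \<subseteq> {x \<in> M3 G \<tau> \<sigma> d s. d3 G \<tau> d x = 0}"
  proof
    fix x assume x: "x \<in> d2 G \<tau> ` M2 G \<tau> \<sigma> d s"
    then have "x \<in> M3 G \<tau> \<sigma> d s" using p1b by blast
    moreover obtain y where y: "y \<in> ZG G" "x = (y ** T) ** om" using x by (auto simp: M2_eq d2_eq)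
    moreover have "x ** N = 0" by (simp only: y(2) gm_assoc om_N gm_zero_right)
    ultimately show "x \<in> {x \<in> M3 G \<tau> \<sigma> d s. d3 G \<tau> d x = 0}" by (simp add: d3_eq)
  qed
qed

lemma h2_M3: "m \<in> M3 G \<tau> \<sigma> d s \<Longrightarrow> \<exists>y\<in>ZG G. m = y ** BB \<and> h2 G \<tau> \<sigma> d s m = y ** CC"
  by (auto simp: M3_eq h2_val)

lemma p2: "(\<forall>x\<in>ZG G. \<forall>y\<in>ZG G. x ** BB = y ** BB \<longrightarrow> x ** CC = y ** CC)
      \<and> (\<forall>x\<in>ZG G. h2 G \<tau> \<sigma> d s (x ** BB) = x ** CC)
      \<and> h2 G \<tau> \<sigma> d s ` M3 G \<tau> \<sigma> d s \<subseteq> M2 G \<tau> \<sigma> d s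
      \<and> (\<forall>m\<in>M3 G \<tau> \<sigma> d s. \<forall>n\<in>M3 G \<tau> \<sigma> d s.
            h2 G \<tau> \<sigma> d s (m + n) = h2 G \<tau> \<sigma> d s m + h2 G \<tau> \<sigma> d s n)
      \<and> (\<forall>r\<in>ZG G. \<forall>m\<in>M3 G \<tau> \<sigma> d s.
            h2 G \<tau> \<sigma> d s (r ** m) = r ** (h2 G \<tau> \<sigma> d s m))"
proof (intro conjI ballI impI)
  show "\<And>x y. x \<in> ZG G \<Longrightarrow> y \<in> ZG G \<Longrightarrow> x ** BB = y ** BB \<Longrightarrow> x ** CC = y ** CC" by (rule WD)
  show "\<And>x. x \<in> ZG G \<Longrightarrow> h2 G \<tau> \<sigma> d s (x ** BB) = x ** CC" by (rule h2_val)
  show "h2 G \<tau> \<sigma> d s ` M3 G \<tau> \<sigma> d s \<subseteq> M2 G \<tau> \<sigma> d s"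
  proof
    fix z assume "z \<in> h2 G \<tau> \<sigma> d s ` M3 G \<tau> \<sigma> d s"
    then obtain y where "y \<in> ZG G" "z = y ** CC" using h2_M3 by blast
    then have "z = (y ** P ** u) ** T" by (simp only: C_def' gm_assoc)
    then show "z \<in> M2 G \<tau> \<sigma> d s" by (auto simp: M2_eq)
  qed
  fix m assume m: "m \<in> M3 G \<tau> \<sigma> d s"
  then obtain x where x: "x \<in> ZG G" "m = x ** BB" "h2 G \<tau> \<sigma> d s m = x ** CC" using h2_M3 by blast
  { fix n assume "n \<in> M3 G \<tau> \<sigma> d s"
    then obtain y where y: "y \<in> ZG G" "n = y ** BB" "h2 G \<tau> \<sigma> d s n = y ** CC" using h2_M3 by blast
    have "m + n = (x + y) ** BB" by (simp only: x(2) y(2) gm_add_left)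
    then have "h2 G \<tau> \<sigma> d s (m + n) = (x + y) ** CC" using h2_val[of "x + y"] x y by simp
    then show "h2 G \<tau> \<sigma> d s (m + n) = h2 G \<tau> \<sigma> d s m + h2 G \<tau> \<sigma> d s n"
      by (simp only: x(3) y(3) gm_add_left) }
  { fix r assume r: "r \<in> ZG G"
    have "r ** m = (r ** x) ** BB" by (simp only: x(2) gm_assoc)
    then have "h2 G \<tau> \<sigma> d s (r ** m) = (r ** x) ** CC" using h2_val[of "r ** x"] by simp
    then show "h2 G \<tau> \<sigma> d s (r ** m) = r ** h2 G \<tau> \<sigma> d s m"
      by (simp only: x(3) gm_assoc) }
qed

lemma p3: "(\<forall>x\<in>M1 G \<tau> \<sigma> d s. h1 G \<tau> d (d1 x) = zsc (int d) x)
      \<and> (\<forall>x\<in>M2 G \<tau> \<sigma> d s. d1 (h1 G \<tau> d x) + h2 G \<tau> \<sigma> d s (d2 G \<tau> x) = zsc (int d) x)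
      \<and> (\<forall>x\<in>M3 G \<tau> \<sigma> d s. d2 G \<tau> (h2 G \<tau> \<sigma> d s x) + h3 (d3 G \<tau> d x) = zsc (int d) x)
      \<and> (\<forall>x\<in>M4 G \<tau> \<sigma> d s. d3 G \<tau> d (h3 x) = zsc (int d) x)"
proof (intro conjI ballI)
  fix x assume "x \<in> M1 G \<tau> \<sigma> d s"
  then obtain y where y: "x = y ** (T ** N)" by (auto simp: M1_eq)
  show "h1 G \<tau> d (d1 x) = zsc (int d) x"
    by (simp only: h1_eq d1_def y gm_assoc NN gm_zsc_right)
next
  fix x assume "x \<in> M2 G \<tau> \<sigma> d s"
  then obtain y where y: "y \<in> ZG G" "x = y ** T" by (auto simp: M2_eq)
  have "d2 G \<tau> x = (y ** zz) ** BB" by (simp only: d2_eq y(2) gm_assoc I1)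
  then have "h2 G \<tau> \<sigma> d s (d2 G \<tau> x) = (y ** zz) ** CC" using h2_val[of "y ** zz"] by simp
  then have "d1 (h1 G \<tau> d x) + h2 G \<tau> \<sigma> d s (d2 G \<tau> x) = y ** (T ** N + zz ** CC)"
    by (simp only: d1_def h1_eq y(2) gm_assoc gm_add_right)
  also have "\<dots> = zsc (int d) x" by (simp only: I3 gm_zsc_right y(2))
  finally show "d1 (h1 G \<tau> d x) + h2 G \<tau> \<sigma> d s (d2 G \<tau> x) = zsc (int d) x" .
next
  fix x assume "x \<in> M3 G \<tau> \<sigma> d s"
  then obtain y where y: "y \<in> ZG G" "x = y ** BB" by (auto simp: M3_eq)
  have "h2 G \<tau> \<sigma> d s x = y ** CC" using h2_val[OF y(1)] y(2) by simp
  then have "d2 G \<tau> (h2 G \<tau> \<sigma> d s x) + h3 (d3 G \<tau> d x) = y ** (CC ** om + BB ** N)"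
    by (simp only: d2_eq h3_def d3_eq y(2) gm_assoc gm_add_right)
  also have "\<dots> = zsc (int d) x" by (simp only: I2 gm_zsc_right y(2))
  finally show "d2 G \<tau> (h2 G \<tau> \<sigma> d s x) + h3 (d3 G \<tau> d x) = zsc (int d) x" .
next
  fix x assume "x \<in> M4 G \<tau> \<sigma> d s"
  then obtain y where y: "x = y ** (BB ** N)" by (auto simp: M4_eq)
  show "d3 G \<tau> d (h3 x) = zsc (int d) x"
    by (simp only: d3_eq h3_def y gm_assoc NN gm_zsc_right)
qed

end

theorem theorem6p7:
  fixes G :: "('a, 'b) monoid_scheme" and \<tau> \<sigma> :: 'a and d s :: nat
  assumes grp: "group G"
    and d_odd: "odd d" and s_even: "even s" and s_dvd: "s dvd (d - 1)"
    and tau: "\<tau> \<in> carrier G" and sigma: "\<sigma> \<in> carrier G"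
    and ord_tau: "group.ord G \<tau> = d" and ord_sigma: "group.ord G \<sigma> = s"
    and gen: "carrier G = {\<tau> [^]\<^bsub>G\<^esub> i \<otimes>\<^bsub>G\<^esub> \<sigma> [^]\<^bsub>G\<^esub> j | i j. i < d \<and> j < s}"
    and card: "card (carrier G) = d * s"
    and normal: "\<sigma> \<otimes>\<^bsub>G\<^esub> \<tau> \<otimes>\<^bsub>G\<^esub> inv\<^bsub>G\<^esub> \<sigma> \<in> {\<tau> [^]\<^bsub>G\<^esub> i | i. i < d}"
    and aut_order: "\<forall>k. 0 < k \<and> k < s \<longrightarrow>
        \<sigma> [^]\<^bsub>G\<^esub> k \<otimes>\<^bsub>G\<^esub> \<tau> \<otimes>\<^bsub>G\<^esub> inv\<^bsub>G\<^esub> (\<sigma> [^]\<^bsub>G\<^esub> k) \<noteq> \<tau>"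
    and half: "\<sigma> [^]\<^bsub>G\<^esub> (s div 2) \<otimes>\<^bsub>G\<^esub> \<tau> \<otimes>\<^bsub>G\<^esub> inv\<^bsub>G\<^esub> (\<sigma> [^]\<^bsub>G\<^esub> (s div 2)) = inv\<^bsub>G\<^esub> \<tau>"
  shows
    \<comment> \<open>(1) the maps land in the stated modules and the sequence is exact\<close>
    "(d1 ` M1 G \<tau> \<sigma> d s \<subseteq> M2 G \<tau> \<sigma> d s
      \<and> d2 G \<tau> ` M2 G \<tau> \<sigma> d s \<subseteq> M3 G \<tau> \<sigma> d s
      \<and> d3 G \<tau> d ` M3 G \<tau> \<sigma> d s \<subseteq> M4 G \<tau> \<sigma> d s
      \<and> inj_on d1 (M1 G \<tau> \<sigma> d s)
      \<and> {x \<in> M2 G \<tau> \<sigma> d s. d2 G \<tau> x = 0} = d1 ` M1 G \<tau> \<sigma> d s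
      \<and> {x \<in> M3 G \<tau> \<sigma> d s. d3 G \<tau> d x = 0} = d2 G \<tau> ` M2 G \<tau> \<sigma> d s
      \<and> d3 G \<tau> d ` M3 G \<tau> \<sigma> d s = M4 G \<tau> \<sigma> d s)
   \<and> \<comment> \<open>(2) h2 is well defined and a Z[G]-module homomorphism M3 -> M2\<close>
     ((\<forall>x\<in>ZG G. \<forall>y\<in>ZG G. gmul G x (Bel G \<tau> \<sigma> d s) = gmul G y (Bel G \<tau> \<sigma> d s)
          \<longrightarrow> gmul G x (Cel G \<tau> \<sigma> d s) = gmul G y (Cel G \<tau> \<sigma> d s))
      \<and> (\<forall>x\<in>ZG G. h2 G \<tau> \<sigma> d s (gmul G x (Bel G \<tau> \<sigma> d s)) = gmul G x (Cel G \<tau> \<sigma> d s))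
      \<and> h2 G \<tau> \<sigma> d s ` M3 G \<tau> \<sigma> d s \<subseteq> M2 G \<tau> \<sigma> d s
      \<and> (\<forall>m\<in>M3 G \<tau> \<sigma> d s. \<forall>n\<in>M3 G \<tau> \<sigma> d s.
            h2 G \<tau> \<sigma> d s (m + n) = h2 G \<tau> \<sigma> d s m + h2 G \<tau> \<sigma> d s n)
      \<and> (\<forall>r\<in>ZG G. \<forall>m\<in>M3 G \<tau> \<sigma> d s.
            h2 G \<tau> \<sigma> d s (gmul G r m) = gmul G r (h2 G \<tau> \<sigma> d s m)))
   \<and> \<comment> \<open>(3) prism conditions\<close>
     ((\<forall>x\<in>M1 G \<tau> \<sigma> d s. h1 G \<tau> d (d1 x) = zsc (int d) x)
      \<and> (\<forall>x\<in>M2 G \<tau> \<sigma> d s. d1 (h1 G \<tau> d x) + h2 G \<tau> \<sigma> d s (d2 G \<tau> x) = zsc (int d) x)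
      \<and> (\<forall>x\<in>M3 G \<tau> \<sigma> d s. d2 G \<tau> (h2 G \<tau> \<sigma> d s x) + h3 (d3 G \<tau> d x) = zsc (int d) x)
      \<and> (\<forall>x\<in>M4 G \<tau> \<sigma> d s. d3 G \<tau> d (h3 x) = zsc (int d) x))"
proof -
  have s0: "s \<noteq> 0"
  proof
    assume "s = 0"
    then have "carrier G = {}" using gen by simp
    then show False using group.is_monoid[OF grp] monoid.one_closed by blast
  qed
  have d0: "d \<noteq> 0" using d_odd by (metis odd_pos not_gr_zero)
  have fin: "finite (carrier G)"
    using card s0 d0 by (metis card.infinite mult_is_0)
  have "S G \<tau> \<sigma> d s"
    by (rule S.intro[OF gr.intro[OF grp gr_axioms.intro[OF fin]]
          S_axioms.intro[OF d_odd s_even tau sigma ord_tau ord_sigma gen card normal aut_order half]])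
  then interpret S G \<tau> \<sigma> d s .
  show ?thesis using p1a p1b p1c p1d p1e p1f p2 p3 by blast
qed


end
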